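(* For $(s_n,x_n),(s,x)\in T\times[0,\infty)$, as $n\to\infty$, $$\rho_2((s_n,x_n),(s,x))\to0\iff\big[x_n\to x\ \text{and}\ x\,(R_{s_n,s}(1,1)-1)\to0\big].$$
   Context: $(U_1(t))_{t\in T}$ is a process with uniform $(0,1)$ margins such that the bivariate tail copulas $R_{s,t}(x,y)=\lim_{u\downarrow0}u^{-1}\mathbb{P}\{U_1(s)\le ux,U_1(t)\le uy\}$ exist for all $s,t\in T$, $x,y\ge0$. $\rho_2((s,x),(t,y))=(x-2R_{s,t}(x,y)+y)^{1/2}$, the standard deviation semimetric of a centered Gaussian process $W$ on $T\times[0,\infty)$ with covariance $R_{s,t}(x,y)$. *)

theory Defs
  imports "HOL-Probability.Probability"
begin

text \<open>Tail copula of the process U at (s,t), evaluated at (x,y): the limit as u tends to 0 from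
the right of u^{-1} P(U(s) \<le> u x, U(t) \<le> u y).\<close>
definition tail_copula_quot :: "'a measure \<Rightarrow> ('T \<Rightarrow> 'a \<Rightarrow> real) \<Rightarrow> 'T \<Rightarrow> 'T \<Rightarrow> real \<Rightarrow> real \<Rightarrow> real \<Rightarrow> real" where
  "tail_copula_quot M U s t x y u =
     measure M {\<omega> \<in> space M. U s \<omega> \<le> u * x \<and> U t \<omega> \<le> u * y} / u"

definition rho2 :: "('T \<Rightarrow> 'T \<Rightarrow> real \<Rightarrow> real \<Rightarrow> real) \<Rightarrow> 'T \<times> real \<Rightarrow> 'T \<times> real \<Rightarrow> real" where
  "rho2 R p q = sqrt (snd p - 2 * R (fst p) (fst q) (snd p) (snd q) + snd q)"

end

theory Submission
  imports Defs
begin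

locale tcl = prob_space M for M :: "'a measure" +
  fixes U :: "'T \<Rightarrow> 'a \<Rightarrow> real" and R :: "'T \<Rightarrow> 'T \<Rightarrow> real \<Rightarrow> real \<Rightarrow> real"
  assumes meas[measurable]: "\<And>t. U t \<in> borel_measurable M"
    and unif: "\<And>t u. 0 \<le> u \<Longrightarrow> u \<le> 1 \<Longrightarrow> measure M {\<omega> \<in> space M. U t \<omega> \<le> u} = u"
    and lim: "\<And>s t a b. 0 \<le> a \<Longrightarrow> 0 \<le> b \<Longrightarrow>
           (tail_copula_quot M U s t a b \<longlongrightarrow> R s t a b) (at_right 0)"
begin

lemma ev_small: 
  fixes c :: real assumes "0 \<le> c"
  shows "eventually (\<lambda>u. 0 < u \<and> u * c \<le> 1) (at_right 0)"
  unfolding eventually_at_right_field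
proof (rule exI[of _ "1/(c+1)"], rule conjI)
  show "0 < 1/(c+1)" using assms by simp
  show "\<forall>y>0. y < 1 / (c + 1) \<longrightarrow> 0 < y \<and> y * c \<le> 1"
  proof (intro allI impI)
    fix y :: real assume "0 < y" "y < 1/(c+1)"
    then have "y * (c+1) < 1" using assms by (simp add: field_simps)
    moreover have "y * c \<le> y * (c+1)" using \<open>0 < y\<close> by (simp add: algebra_simps)
    ultimately show "0 < y \<and> y * c \<le> 1" using \<open>0 < y\<close> by linarith
  qed
qed

lemma R_nonneg: assumes "0 \<le> a" "0 \<le> b" shows "0 \<le> R s t a b"
proof (rule tendsto_lowerbound[OF lim[OF assms]])
  show "\<forall>\<^sub>F u in at_right 0. 0 \<le> tail_copula_quot M U s t a b u"
    using eventually_at_right_less[of "0::real"]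
    by eventually_elim (simp add: tail_copula_quot_def)
qed simp

lemma R_le1: assumes "0 \<le> a" "0 \<le> b" shows "R s t a b \<le> a"
proof (rule tendsto_upperbound[OF lim[OF assms]])
  show "\<forall>\<^sub>F u in at_right 0. tail_copula_quot M U s t a b u \<le> a"
    using ev_small[OF assms(1)]
  proof eventually_elim
    case (elim u)
    have "measure M {\<omega> \<in> space M. U s \<omega> \<le> u * a \<and> U t \<omega> \<le> u * b}
          \<le> measure M {\<omega> \<in> space M. U s \<omega> \<le> u * a}"
      by (rule finite_measure_mono) auto
    also have "\<dots> = u * a" using elim assms by (intro unif) auto
    finally show ?case using elim by (simp add: tail_copula_quot_def divide_simps mult.commute)
  qed
qed simp

lemma R_le2: assumes "0 \<le> a" "0 \<le> b" shows "R s t a b \<le> b"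
proof (rule tendsto_upperbound[OF lim[OF assms]])
  show "\<forall>\<^sub>F u in at_right 0. tail_copula_quot M U s t a b u \<le> b"
    using ev_small[OF assms(2)]
  proof eventually_elim
    case (elim u)
    have "measure M {\<omega> \<in> space M. U s \<omega> \<le> u * a \<and> U t \<omega> \<le> u * b}
          \<le> measure M {\<omega> \<in> space M. U t \<omega> \<le> u * b}"
      by (rule finite_measure_mono) auto
    also have "\<dots> = u * b" using elim assms by (intro unif) auto
    finally show ?case using elim by (simp add: tail_copula_quot_def divide_simps mult.commute)
  qed
qed simp

lemma R_lip0: assumes "0 \<le> a'" "a' \<le> a" "0 \<le> b"
  shows "\<bar>R s t a b - R s t a' b\<bar> \<le> a - a'"
proof -
  have l: "((\<lambda>u. tail_copula_quot M U s t a b u - tail_copula_quot M U s t a' b u) \<longlongrightarrow>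
      R s t a b - R s t a' b) (at_right 0)"
    using assms by (intro tendsto_diff lim) auto
  have ev: "\<forall>\<^sub>F u in at_right 0. 0 \<le> tail_copula_quot M U s t a b u - tail_copula_quot M U s t a' b u
     \<and> tail_copula_quot M U s t a b u - tail_copula_quot M U s t a' b u \<le> a - a'"
    using ev_small[OF order_trans[OF assms(1,2)]]
  proof eventually_elim
    case (elim u)
    define A where "A = {\<omega> \<in> space M. U s \<omega> \<le> u * a}"
    define A' where "A' = {\<omega> \<in> space M. U s \<omega> \<le> u * a'}"
    define B where "B = {\<omega> \<in> space M. U t \<omega> \<le> u * b}"
    have sA: "A \<in> sets M" "A' \<in> sets M" "B \<in> sets M" unfolding A_def A'_def B_def by measurable
    have e1: "{\<omega> \<in> space M. U s \<omega> \<le> u * a \<and> U t \<omega> \<le> u * b} = A \<inter> B"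
      unfolding A_def B_def by auto
    have e2: "{\<omega> \<in> space M. U s \<omega> \<le> u * a' \<and> U t \<omega> \<le> u * b} = A' \<inter> B"
      unfolding A'_def B_def by auto
    have sub: "A' \<subseteq> A" unfolding A_def A'_def using elim assms
      by (auto intro: order_trans mult_left_mono)
    have m1: "measure M (A' \<inter> B) \<le> measure M (A \<inter> B)"
      using sub sA by (intro finite_measure_mono) auto
    have "measure M (A \<inter> B) \<le> measure M ((A' \<inter> B) \<union> (A - A'))"
      using sA by (intro finite_measure_mono) auto
    also have "\<dots> \<le> measure M (A' \<inter> B) + measure M (A - A')"
      using sA by (intro measure_subadditive) auto
    also have "measure M (A - A') = u * a - u * a'"
    proof -
      have "u * a' \<le> u * a" using elim assms by (intro mult_left_mono) auto
      then have "u * a' \<le> 1" using elim by linarith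
      then show ?thesis
        using finite_measure_Diff[OF sA(1,2) sub] unif[of "u*a" s] unif[of "u*a'" s] elim assms
        unfolding A_def A'_def by auto
    qed
    finally have m2: "measure M (A \<inter> B) - measure M (A' \<inter> B) \<le> u * (a - a')"
      by (simp add: algebra_simps)
    have "tail_copula_quot M U s t a b u - tail_copula_quot M U s t a' b u
        = (measure M (A \<inter> B) - measure M (A' \<inter> B)) / u"
      unfolding tail_copula_quot_def e1 e2 by (simp add: diff_divide_distrib)
    then have "u * (tail_copula_quot M U s t a b u - tail_copula_quot M U s t a' b u)
        = measure M (A \<inter> B) - measure M (A' \<inter> B)" using elim by simp
    moreover define d where "d = tail_copula_quot M U s t a b u - tail_copula_quot M U s t a' b u"
    ultimately have ud: "u * d = measure M (A \<inter> B) - measure M (A' \<inter> B)" by simp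
    have "0 \<le> u * d" using ud m1 by simp
    then have "0 \<le> d" using elim by (simp add: zero_le_mult_iff)
    moreover have "u * d \<le> u * (a - a')" using ud m2 by simp
    then have "d \<le> a - a'" using elim by simp
    ultimately show ?case unfolding d_def by simp
  qed
  have "0 \<le> R s t a b - R s t a' b"
    by (rule tendsto_lowerbound[OF l]) (use ev in \<open>auto elim: eventually_mono\<close>)
  moreover have "R s t a b - R s t a' b \<le> a - a'"
    by (rule tendsto_upperbound[OF l]) (use ev in \<open>auto elim: eventually_mono\<close>)
  ultimately show ?thesis by simp
qed

lemma R_lip: assumes "0 \<le> a'" "0 \<le> a" "0 \<le> b"
  shows "\<bar>R s t a b - R s t a' b\<bar> \<le> \<bar>a - a'\<bar>"
proof (cases "a' \<le> a")
  case True then show ?thesis using R_lip0[OF assms(1) True assms(3)] by simp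
next
  case False then show ?thesis using R_lip0[OF assms(2) _ assms(3), of a' s t] by simp
qed

lemma R_hom: assumes "0 \<le> c" shows "R s t c c = c * R s t 1 1"
proof (cases "c = 0")
  case True then show ?thesis using R_nonneg[of 0 0 s t] R_le1[of 0 0 s t] by simp
next
  case False
  then have cpos: "0 < c" using assms by simp
  have eq: "tail_copula_quot M U s t c c = (\<lambda>u. c * tail_copula_quot M U s t 1 1 (c * u))"
    using cpos by (auto simp: tail_copula_quot_def mult.commute fun_eq_iff)
  have fl: "filterlim (\<lambda>u. c * u) (at_right 0) (at_right (0::real))"
    unfolding filterlim_at
  proof
    show "\<forall>\<^sub>F x in at_right 0. c * x \<in> {0<..} \<and> c * x \<noteq> 0"
      using eventually_at_right_less[of "0::real"] by eventually_elim (use cpos in auto)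
    have "((\<lambda>u. c * u) \<longlongrightarrow> c * 0) (at_right (0::real))"
      by (intro tendsto_intros)
    then show "((\<lambda>u. c * u) \<longlongrightarrow> 0) (at_right (0::real))" by simp
  qed
  have "((\<lambda>u. c * tail_copula_quot M U s t 1 1 (c * u)) \<longlongrightarrow> c * R s t 1 1) (at_right 0)"
    by (intro tendsto_mult tendsto_const filterlim_compose[OF lim fl]) auto
  then have "(tail_copula_quot M U s t c c \<longlongrightarrow> c * R s t 1 1) (at_right 0)"
    using eq by simp
  from tendsto_unique[OF _ lim[OF assms assms] this] show ?thesis by simp
qed

end

theorem lemmaA5:
  fixes M :: "'a measure" and U :: "'T \<Rightarrow> 'a \<Rightarrow> real"
    and R :: "'T \<Rightarrow> 'T \<Rightarrow> real \<Rightarrow> real \<Rightarrow> real"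
    and s :: "nat \<Rightarrow> 'T" and x :: "nat \<Rightarrow> real" and s0 :: 'T and x0 :: real
  assumes "prob_space M"
    and "\<And>t. U t \<in> borel_measurable M"
    and "\<And>t u. 0 \<le> u \<Longrightarrow> u \<le> 1 \<Longrightarrow> measure M {\<omega> \<in> space M. U t \<omega> \<le> u} = u"
    and "\<And>s t a b. 0 \<le> a \<Longrightarrow> 0 \<le> b \<Longrightarrow>
           (tail_copula_quot M U s t a b \<longlongrightarrow> R s t a b) (at_right 0)"
    and "\<And>n. 0 \<le> x n" and "0 \<le> x0"
  shows "((\<lambda>n. rho2 R (s n, x n) (s0, x0)) \<longlonglongrightarrow> 0) \<longleftrightarrow>
         (x \<longlonglongrightarrow> x0 \<and> (\<lambda>n. x0 * (R (s n) s0 1 1 - 1)) \<longlonglongrightarrow> 0)"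
proof -
  interpret tcl M U R
    using assms(1-4) by (simp add: tcl_def tcl_axioms_def)
  define D where "D n = x n - 2 * R (s n) s0 (x n) x0 + x0" for n
  define E where "E n = x0 * (R (s n) s0 1 1 - 1)" for n
  have rho: "rho2 R (s n, x n) (s0, x0) = sqrt (D n)" for n by (simp add: rho2_def D_def)
  have Dge: "\<bar>x n - x0\<bar> \<le> D n" for n
    using R_le1[OF assms(5)[of n] assms(6), of "s n" s0] R_le2[OF assms(5)[of n] assms(6), of "s n" s0]
    unfolding D_def by linarith
  have hom: "R (s n) s0 x0 x0 = x0 * R (s n) s0 1 1" for n using R_hom[OF assms(6)] by simp
  have lip: "\<bar>R (s n) s0 (x n) x0 - R (s n) s0 x0 x0\<bar> \<le> \<bar>x n - x0\<bar>" for n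
    using R_lip[OF assms(6) assms(5)[of n] assms(6)] by simp
  have DE: "D n = (x n - x0) - 2 * E n - 2 * (R (s n) s0 (x n) x0 - R (s n) s0 x0 x0)" for n
    unfolding D_def E_def hom by (simp add: algebra_simps)
  have b1: "\<bar>E n\<bar> \<le> (D n + 3 * \<bar>x n - x0\<bar>) / 2" for n
    using DE[of n] lip[of n] Dge[of n] by (simp add: abs_if split: if_splits)
  have b2: "D n \<le> 3 * \<bar>x n - x0\<bar> + 2 * \<bar>E n\<bar>" for n
    using DE[of n] lip[of n] abs_ge_self[of "E n"] abs_ge_minus_self[of "E n"]
      abs_ge_self[of "x n - x0"] abs_ge_self[of "R (s n) s0 (x n) x0 - R (s n) s0 x0 x0"]
      abs_ge_minus_self[of "R (s n) s0 (x n) x0 - R (s n) s0 x0 x0"] by (smt (verit))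
  have Dnn: "0 \<le> D n" for n using Dge[of n] by linarith
  show ?thesis
  proof
    assume h: "(\<lambda>n. rho2 R (s n, x n) (s0, x0)) \<longlonglongrightarrow> 0"
    then have "(\<lambda>n. sqrt (D n)) \<longlonglongrightarrow> 0" by (simp add: rho)
    then have "(\<lambda>n. (sqrt (D n))^2) \<longlonglongrightarrow> 0^2" by (intro tendsto_intros)
    then have D0: "D \<longlonglongrightarrow> 0" using Dnn by simp
    have x0l: "(\<lambda>n. x n - x0) \<longlonglongrightarrow> 0"
      by (rule Lim_null_comparison[OF _ D0]) (use Dge in simp)
    then have xl: "x \<longlonglongrightarrow> x0" by (simp add: LIM_zero_iff)
    have "(\<lambda>n. (D n + 3 * \<bar>x n - x0\<bar>) / 2) \<longlonglongrightarrow> (0 + 3 * \<bar>0\<bar>) / 2"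
      by (intro tendsto_intros D0 x0l) simp_all
    then have "(\<lambda>n. (D n + 3 * \<bar>x n - x0\<bar>) / 2) \<longlonglongrightarrow> 0" by simp
    then have "E \<longlonglongrightarrow> 0"
      by (rule Lim_null_comparison[rotated]) (use b1 in simp)
    then show "x \<longlonglongrightarrow> x0 \<and> (\<lambda>n. x0 * (R (s n) s0 1 1 - 1)) \<longlonglongrightarrow> 0"
      using xl by (simp add: E_def[abs_def])
  next
    assume h: "x \<longlonglongrightarrow> x0 \<and> (\<lambda>n. x0 * (R (s n) s0 1 1 - 1)) \<longlonglongrightarrow> 0"
    then have x0l: "(\<lambda>n. x n - x0) \<longlonglongrightarrow> 0" by (simp add: LIM_zero_iff)
    from h have E0: "E \<longlonglongrightarrow> 0" by (simp add: E_def[abs_def])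
    have "(\<lambda>n. 3 * \<bar>x n - x0\<bar> + 2 * \<bar>E n\<bar>) \<longlonglongrightarrow> 3 * \<bar>0\<bar> + 2 * \<bar>0\<bar>"
      by (intro tendsto_intros E0 x0l)
    then have "(\<lambda>n. 3 * \<bar>x n - x0\<bar> + 2 * \<bar>E n\<bar>) \<longlonglongrightarrow> 0" by simp
    then have D0: "D \<longlonglongrightarrow> 0"
      by (rule Lim_null_comparison[rotated]) (use b2 Dnn in simp)
    have "(\<lambda>n. sqrt (D n)) \<longlonglongrightarrow> sqrt 0" by (intro tendsto_intros D0)
    then show "(\<lambda>n. rho2 R (s n, x n) (s0, x0)) \<longlonglongrightarrow> 0" by (simp add: rho)
  qed
qed

end
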